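(* Let $(N,\mathcal{I})$ be a set system, $f:2^N\to\mathbb{R}_{\ge0}$ a normalized monotone submodular function with multilinear extension $F$, $\alpha\in(0,1]$, $\ell$ a positive integer, and fix $T\in\mathcal{I}$. Let $S_1,\dots,S_\ell$ be random sets in $\mathcal{I}$, let $x_0=0$ and $x_i=x_{i-1}+\frac1\ell\mathbf{1}_{S_i}$. For each $i$ define, for $A,B\subseteq N$, $g_i(A)=F(x_{i-1}+\frac1\ell\mathbf{1}_A)-F(x_{i-1})$ and $g_i(A\uplus B)=F(x_{i-1}+\frac1\ell(\mathbf{1}_A+\mathbf{1}_B))-F(x_{i-1})$. Suppose that for each $i$, conditioned on $S_1,\dots,S_{i-1}$, $\mathbb{E}[g_i(S_i)]\ge\alpha\,\mathbb{E}[g_i(S_i\uplus T)-g_i(S_i)]$. Then $x_\ell$ is a convex combination of indicator vectors of $\ell$ sets of $\mathcal{I}$, and $\mathbb{E}[F(x_\ell)]\ge\bigl(1-(1+\alpha/\ell)^{-\ell}\bigr)f(T)\ge(1-2/\ell)(1-e^{-\alpha})f(T)$; in particular, for $\ell\ge2/\varepsilon$, $\mathbb{E}[F(x_\ell)]\ge(1-\varepsilon)(1-e^{-\alpha})f(T)$.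
   Context: $f$ normalized: $f(\emptyset)=0$; monotone: $f(A)\le f(B)$ for $A\subseteq B$; submodular: $f(A)+f(B)\ge f(A\cup B)+f(A\cap B)$. The multilinear extension is $F(x)=\mathbb{E}[f(R)]$ for $x\in\mathbb{R}_{\ge0}^N$, where $R$ contains each $e$ independently with probability $\min\{x_e,1\}$; $\mathbf{1}_A$ is the indicator vector of $A$. *)

theory Defs
  imports "HOL-Probability.Probability"
begin

definition normalized_set_fun :: "('a set \<Rightarrow> real) \<Rightarrow> bool" where
  "normalized_set_fun f \<longleftrightarrow> f {} = 0"

definition monotone_set_fun :: "'a set \<Rightarrow> ('a set \<Rightarrow> real) \<Rightarrow> bool" where
  "monotone_set_fun N f \<longleftrightarrow> (\<forall>A B. A \<subseteq> B \<and> B \<subseteq> N \<longrightarrow> f A \<le> f B)"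

definition submodular_set_fun :: "'a set \<Rightarrow> ('a set \<Rightarrow> real) \<Rightarrow> bool" where
  "submodular_set_fun N f \<longleftrightarrow>
     (\<forall>A B. A \<subseteq> N \<and> B \<subseteq> N \<longrightarrow> f A + f B \<ge> f (A \<union> B) + f (A \<inter> B))"

text \<open>Multilinear extension: F x = E[f R], R contains each e in N independently
  with probability min (x e) 1.\<close>
definition multilinear_ext :: "'a set \<Rightarrow> ('a set \<Rightarrow> real) \<Rightarrow> ('a \<Rightarrow> real) \<Rightarrow> real" where
  "multilinear_ext N f x =
     (\<Sum>R\<in>Pow N. f R * (\<Prod>e\<in>R. min (x e) 1) * (\<Prod>e\<in>N - R. 1 - min (x e) 1))"

definition ind_vec :: "'a set \<Rightarrow> 'a \<Rightarrow> real" where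
  "ind_vec A = (\<lambda>e. if e \<in> A then 1 else 0)"

definition xvec :: "nat \<Rightarrow> 'a set list \<Rightarrow> 'a \<Rightarrow> real" where
  "xvec l hs = (\<lambda>e. \<Sum>S\<leftarrow>hs. (1 / real l) * ind_vec S e)"

text \<open>Joint law of the random history (S_1,...,S_i): S_{i+1} is drawn from the
  conditional distribution step [S_1,...,S_i] given the past.\<close>
fun hist :: "('a set list \<Rightarrow> 'a set pmf) \<Rightarrow> nat \<Rightarrow> 'a set list pmf" where
  "hist step 0 = return_pmf []"
| "hist step (Suc i) = bind_pmf (hist step i) (\<lambda>h. map_pmf (\<lambda>S. h @ [S]) (step h))"

end

theory Submission
  imports Defs
begin


definition MLE :: "'a set \<Rightarrow> ('a set \<Rightarrow> real) \<Rightarrow> ('a \<Rightarrow> real) \<Rightarrow> real" where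
  "MLE N g p = (\<Sum>R\<in>Pow N. g R * (\<Prod>e\<in>R. p e) * (\<Prod>e\<in>N - R. 1 - p e))"

lemma Mle_cong: "(\<And>e. e \<in> N \<Longrightarrow> p e = q e) \<Longrightarrow> MLE N g p = MLE N g q"
  unfolding MLE_def
  by (intro sum.cong refl arg_cong2[where f="(*)"] prod.cong) auto

lemma Mle_diff: "MLE N (\<lambda>R. a R - b R) p = MLE N a p - MLE N b p"
  unfolding MLE_def by (simp add: sum_subtractf algebra_simps)

lemma Mle_neg: "MLE N (\<lambda>R. - a R) p = - MLE N a p"
  unfolding MLE_def by (simp add: sum_negf)

lemma Mle_empty: "MLE {} g p = g {}"
  unfolding MLE_def by simp

lemma Mle_insert:
  assumes fin: "finite M" and d: "d \<notin> M"
  shows "MLE (insert d M) g p = p d * MLE M (\<lambda>R. g (insert d R)) p + (1 - p d) * MLE M g p"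
proof -
  have P: "Pow (insert d M) = Pow M \<union> insert d ` Pow M" by (rule Pow_insert)
  have disj: "Pow M \<inter> insert d ` Pow M = {}" using d by auto
  have inj: "inj_on (insert d) (Pow M)" using d unfolding inj_on_def by (metis Pow_iff insert_ident subset_iff)
  have fP: "finite (Pow M)" using fin by simp
  let ?t = "\<lambda>R. g R * (\<Prod>e\<in>R. p e) * (\<Prod>e\<in>insert d M - R. 1 - p e)"
  have s1: "sum ?t (Pow M) = (\<Sum>R\<in>Pow M. (1 - p d) * (g R * (\<Prod>e\<in>R. p e) * (\<Prod>e\<in>M - R. 1 - p e)))"
  proof (rule sum.cong[OF refl])
    fix R assume R: "R \<in> Pow M"
    have "insert d M - R = insert d (M - R)" using R d by auto
    moreover have "finite (M - R)" using fin by auto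
    moreover have "d \<notin> M - R" using d by auto
    ultimately show "?t R = (1 - p d) * (g R * (\<Prod>e\<in>R. p e) * (\<Prod>e\<in>M - R. 1 - p e))"
      by simp
  qed
  have s2: "sum ?t (insert d ` Pow M) = (\<Sum>R\<in>Pow M. p d * (g (insert d R) * (\<Prod>e\<in>R. p e) * (\<Prod>e\<in>M - R. 1 - p e)))"
    unfolding sum.reindex[OF inj] o_def
  proof (rule sum.cong[OF refl])
    fix R assume R: "R \<in> Pow M"
    have "insert d M - insert d R = M - R" using R d by auto
    moreover have "finite R" using R fin finite_subset by auto
    moreover have "d \<notin> R" using d R by auto
    ultimately show "?t (insert d R) = p d * (g (insert d R) * (\<Prod>e\<in>R. p e) * (\<Prod>e\<in>M - R. 1 - p e))"
      by simp
  qed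
  show ?thesis unfolding MLE_def P
    by (subst sum.union_disjoint) (use fP disj in \<open>auto simp: s1 s2 sum_distrib_left\<close>)
qed

lemma Mle_nonneg:
  assumes "finite N" "\<And>e. e \<in> N \<Longrightarrow> 0 \<le> p e \<and> p e \<le> 1" "\<And>R. R \<subseteq> N \<Longrightarrow> 0 \<le> g R"
  shows "0 \<le> MLE N g p"
  unfolding MLE_def
proof (rule sum_nonneg)
  fix R assume R: "R \<in> Pow N"
  have "0 \<le> (\<Prod>e\<in>R. p e)" using R assms(2) by (intro prod_nonneg) auto
  moreover have "0 \<le> (\<Prod>e\<in>N - R. 1 - p e)" using assms(2) by (intro prod_nonneg) auto
  ultimately show "0 \<le> g R * (\<Prod>e\<in>R. p e) * (\<Prod>e\<in>N - R. 1 - p e)" using R assms(3) by simp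
qed

lemma Mle_bound:
  assumes "\<And>e. e \<in> N \<Longrightarrow> 0 \<le> p e \<and> p e \<le> 1"
  shows "\<bar>MLE N g p\<bar> \<le> (\<Sum>R\<in>Pow N. \<bar>g R\<bar>)"
  unfolding MLE_def
proof (rule order.trans[OF sum_abs], rule sum_mono)
  fix R assume R: "R \<in> Pow N"
  have a: "\<bar>\<Prod>e\<in>R. p e\<bar> \<le> 1" unfolding abs_prod
    using R assms by (intro prod_le_1) auto
  have b: "\<bar>\<Prod>e\<in>N - R. 1 - p e\<bar> \<le> 1" unfolding abs_prod
    using assms by (intro prod_le_1) auto
  have "\<bar>g R * (\<Prod>e\<in>R. p e) * (\<Prod>e\<in>N - R. 1 - p e)\<bar> = \<bar>g R\<bar> * (\<bar>\<Prod>e\<in>R. p e\<bar> * \<bar>\<Prod>e\<in>N - R. 1 - p e\<bar>)"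
    by (simp add: abs_mult)
  also have "\<dots> \<le> \<bar>g R\<bar> * 1"
    by (intro mult_left_mono) (use a b in \<open>simp_all add: mult_le_one\<close>)
  finally show "\<bar>g R * (\<Prod>e\<in>R. p e) * (\<Prod>e\<in>N - R. 1 - p e)\<bar> \<le> \<bar>g R\<bar>" by simp
qed

lemma Mle_mono:
  assumes "finite N"
  shows "(\<And>d R. d \<in> N \<Longrightarrow> R \<subseteq> N - {d} \<Longrightarrow> g R \<le> g (insert d R)) \<Longrightarrow>
    (\<And>e. e \<in> N \<Longrightarrow> 0 \<le> p e \<and> p e \<le> q e \<and> q e \<le> 1) \<Longrightarrow> MLE N g p \<le> MLE N g q"
  using assms
proof (induction N arbitrary: g rule: finite_induct)
  case empty
  then show ?case by (simp add: Mle_empty)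
next
  case (insert d M)
  note gm = insert.prems(1)
  note pq = insert.prems(2)
  let ?g' = "\<lambda>R. g (insert d R)"
  have pqM: "\<And>e. e \<in> M \<Longrightarrow> 0 \<le> p e \<and> p e \<le> q e \<and> q e \<le> 1"
    using pq by blast
  have h1: "MLE M ?g' p \<le> MLE M ?g' q"
  proof (rule insert.IH[OF _ pqM])
    fix c R assume c: "c \<in> M" and R: "R \<subseteq> M - {c}"
    have "insert d R \<subseteq> insert d M - {c}" using c R insert.hyps(2) by blast
    then have "g (insert d R) \<le> g (insert c (insert d R))" using gm[of c "insert d R"] c by blast
    then show "?g' R \<le> ?g' (insert c R)" by (simp only: insert_commute)
  qed
  have h2: "MLE M g p \<le> MLE M g q"
  proof (rule insert.IH[OF _ pqM])
    fix c R assume "c \<in> M" "R \<subseteq> M - {c}"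
    then show "g R \<le> g (insert c R)" using gm[of c R] by blast
  qed
  have h3: "MLE M g p \<le> MLE M ?g' p"
  proof -
    have pc: "\<And>e. e \<in> M \<Longrightarrow> 0 \<le> p e \<and> p e \<le> 1"
      using pqM by (meson order_trans)
    have gg: "\<And>R. R \<subseteq> M \<Longrightarrow> 0 \<le> ?g' R - g R"
    proof -
      fix R assume "R \<subseteq> M"
      then have "R \<subseteq> insert d M - {d}" using insert.hyps(2) by blast
      then show "0 \<le> ?g' R - g R" using gm[of d R] by simp
    qed
    have "0 \<le> MLE M (\<lambda>R. ?g' R - g R) p"
      by (rule Mle_nonneg[OF insert.hyps(1) pc gg])
    then show ?thesis by (simp add: Mle_diff)
  qed
  have pd: "0 \<le> p d" "p d \<le> q d" "q d \<le> 1" using pq[of d] by simp_all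
  have "p d * MLE M ?g' p + (1 - p d) * MLE M g p \<le> q d * MLE M ?g' p + (1 - q d) * MLE M g p"
  proof -
    have "(q d - p d) * (MLE M g p) \<le> (q d - p d) * MLE M ?g' p"
      using h3 pd by (intro mult_left_mono) simp_all
    then show ?thesis by (simp add: algebra_simps)
  qed
  also have "\<dots> \<le> q d * MLE M ?g' q + (1 - q d) * MLE M g q"
  proof (rule add_mono)
    show "q d * MLE M ?g' p \<le> q d * MLE M ?g' q" using h1 pd by (intro mult_left_mono) simp_all
    show "(1 - q d) * MLE M g p \<le> (1 - q d) * MLE M g q" using h2 pd by (intro mult_left_mono) simp_all
  qed
  finally show ?case using Mle_insert[OF insert.hyps] by simp
qed

lemma Mle_indicator:
  assumes "finite N"
  shows "T \<subseteq> N \<Longrightarrow> (\<And>e. e \<in> N \<Longrightarrow> p e = (if e \<in> T then 1 else 0)) \<Longrightarrow> MLE N g p = g T"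
  using assms
proof (induction N arbitrary: g T rule: finite_induct)
  case empty
  then show ?case by (simp add: Mle_empty)
next
  case (insert d M)
  show ?case
  proof (cases "d \<in> T")
    case True
    have "MLE M (\<lambda>R. g (insert d R)) p = g (insert d (T - {d}))"
      by (rule insert.IH) (use insert True in auto)
    then show ?thesis using insert True by (simp add: Mle_insert insert_absorb)
  next
    case False
    have "MLE M g p = g T"
      by (rule insert.IH) (use insert False in auto)
    then show ?thesis using insert False by (simp add: Mle_insert)
  qed
qed

lemma Mle_diff_coord:
  assumes "finite N" "e \<in> N" "\<And>c. c \<in> N - {e} \<Longrightarrow> r c = s c"
  shows "MLE N f r - MLE N f s = (r e - s e) * MLE (N - {e}) (\<lambda>R. f (insert e R) - f R) r"
proof -
  have N: "N = insert e (N - {e})" using assms by auto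
  have fin: "finite (N - {e})" using assms by auto
  have c1: "MLE (N - {e}) g s = MLE (N - {e}) g r" for g
    by (rule Mle_cong) (use assms in auto)
  have er: "MLE N f r = r e * MLE (N - {e}) (\<lambda>R. f (insert e R)) r + (1 - r e) * MLE (N - {e}) f r"
    using Mle_insert[OF fin, of e f r] assms(2) by (simp add: insert_absorb)
  have es: "MLE N f s = s e * MLE (N - {e}) (\<lambda>R. f (insert e R)) r + (1 - s e) * MLE (N - {e}) f r"
    using Mle_insert[OF fin, of e f s] assms(2) by (simp add: insert_absorb c1)
  have "MLE N f r - MLE N f s = (r e - s e) * (MLE (N - {e}) (\<lambda>R. f (insert e R)) r - MLE (N - {e}) f r)"
    unfolding er es by (simp add: algebra_simps)
  then show ?thesis by (simp add: Mle_diff)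
qed



lemma submod_marg:
  assumes subm: "submodular_set_fun N f" and d: "d \<in> N" and c: "c \<in> N - {d}"
    and R: "R \<subseteq> N - {d} - {c}"
  shows "f (insert c (insert d R)) - f (insert c R) \<le> f (insert d R) - f R"
proof -
  have "f (insert c R) + f (insert d R) \<ge> f (insert c R \<union> insert d R) + f (insert c R \<inter> insert d R)"
  proof -
    have "insert c R \<subseteq> N" "insert d R \<subseteq> N" using d c R by auto
    then show ?thesis using subm unfolding submodular_set_fun_def by blast
  qed
  moreover have "insert c R \<union> insert d R = insert c (insert d R)" by blast
  moreover have "insert c R \<inter> insert d R = R" using c R by blast
  ultimately show ?thesis by simp
qed

lemma monoD: "monotone_set_fun N f \<Longrightarrow> A \<subseteq> B \<Longrightarrow> B \<subseteq> N \<Longrightarrow> f A \<le> f B"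
  unfolding monotone_set_fun_def by simp

lemma D_antitone:
  assumes fin: "finite N" and subm: "submodular_set_fun N f" and e: "e \<in> N"
    and pq: "\<And>c. c \<in> N - {e} \<Longrightarrow> 0 \<le> p c \<and> p c \<le> q c \<and> q c \<le> 1"
  shows "MLE (N - {e}) (\<lambda>R. f (insert e R) - f R) q \<le> MLE (N - {e}) (\<lambda>R. f (insert e R) - f R) p"
proof -
  have "MLE (N - {e}) (\<lambda>R. - (f (insert e R) - f R)) p \<le> MLE (N - {e}) (\<lambda>R. - (f (insert e R) - f R)) q"
  proof (rule Mle_mono[OF _ _ pq])
    show "finite (N - {e})" using fin by simp
    fix c R assume c: "c \<in> N - {e}" and R: "R \<subseteq> N - {e} - {c}"
    show "- (f (insert e R) - f R) \<le> - (f (insert e (insert c R)) - f (insert c R))"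
      using submod_marg[OF subm e c R] by (simp add: insert_commute)
  qed
  then show ?thesis by (simp only: Mle_neg neg_le_iff_le)
qed

lemma D_nonneg:
  assumes fin: "finite N" and mono: "monotone_set_fun N f" and e: "e \<in> N"
    and p: "\<And>c. c \<in> N - {e} \<Longrightarrow> 0 \<le> p c \<and> p c \<le> 1"
  shows "0 \<le> MLE (N - {e}) (\<lambda>R. f (insert e R) - f R) p"
proof (rule Mle_nonneg[OF _ p])
  show "finite (N - {e})" using fin by simp
  fix R assume R: "R \<subseteq> N - {e}"
  have "R \<subseteq> insert e R" "insert e R \<subseteq> N" using R e by auto
  then have "f R \<le> f (insert e R)" by (rule monoD[OF mono])
  then show "0 \<le> f (insert e R) - f R" by simp
qed

lemma step_ineq:
  assumes fin: "finite N" and mono: "monotone_set_fun N f" and subm: "submodular_set_fun N f"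
    and eps: "0 \<le> \<epsilon>"
  shows "T \<subseteq> N \<Longrightarrow> (\<And>e. e \<in> N \<Longrightarrow> 0 \<le> p e \<and> p e \<le> 1) \<Longrightarrow> (\<And>e. e \<in> N \<Longrightarrow> 0 \<le> q e \<and> q e \<le> 1)
    \<Longrightarrow> (\<And>e. e \<in> N - T \<Longrightarrow> q e = p e) \<Longrightarrow> (\<And>e. e \<in> T \<Longrightarrow> p e + \<epsilon> * (1 - p e) \<le> q e)
    \<Longrightarrow> \<epsilon> * (MLE N f (\<lambda>e. if e \<in> T then 1 else p e) - MLE N f p) \<le> MLE N f q - MLE N f p"
proof (induction T arbitrary: q rule: infinite_finite_induct)
  case (infinite T)
  then show ?case using fin finite_subset by blast
next
  case empty
  have "MLE N f q = MLE N f p" by (rule Mle_cong) (use empty in auto)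
  then show ?case by simp
next
  case (insert e T)
  let ?D = "\<lambda>r. MLE (N - {e}) (\<lambda>R. f (insert e R) - f R) r"
  define q' where "q' = q(e := p e)"
  define pT where "pT = (\<lambda>c. if c \<in> T then 1 else p c)"
  define pTe where "pTe = (\<lambda>c. if c \<in> insert e T then 1 else p c)"
  have eN: "e \<in> N" using insert by auto
  have pe: "0 \<le> p e" "p e \<le> 1" using insert.prems(2)[OF eN] by auto
  have qe: "p e + \<epsilon> * (1 - p e) \<le> q e" using insert.prems(5) by simp
  have IH: "\<epsilon> * (MLE N f pT - MLE N f p) \<le> MLE N f q' - MLE N f p"
    unfolding pT_def
  proof (rule insert.IH)
    show "T \<subseteq> N" using insert by auto
    show "\<And>e. e \<in> N \<Longrightarrow> 0 \<le> p e \<and> p e \<le> 1" by (rule insert.prems(2))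
    show "\<And>c. c \<in> N \<Longrightarrow> 0 \<le> q' c \<and> q' c \<le> 1" unfolding q'_def using insert.prems(2,3) by auto
    show "\<And>c. c \<in> N - T \<Longrightarrow> q' c = p c" unfolding q'_def using insert.prems(4) by auto
    show "\<And>c. c \<in> T \<Longrightarrow> p c + \<epsilon> * (1 - p c) \<le> q' c" unfolding q'_def using insert.prems(5) insert.hyps by auto
  qed
  have d1: "MLE N f q - MLE N f q' = (q e - p e) * ?D q"
  proof -
    have "MLE N f q - MLE N f q' = (q e - q' e) * ?D q"
      by (rule Mle_diff_coord[OF fin eN]) (auto simp: q'_def)
    then show ?thesis by (simp add: q'_def)
  qed
  have d2: "MLE N f pTe - MLE N f pT = (1 - p e) * ?D pTe"
  proof -
    have "MLE N f pTe - MLE N f pT = (pTe e - pT e) * ?D pTe"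
      by (rule Mle_diff_coord[OF fin eN]) (use insert.hyps in \<open>auto simp: pT_def pTe_def\<close>)
    then show ?thesis using insert.hyps by (simp add: pT_def pTe_def)
  qed
  have c2: "?D pTe = ?D pT" by (rule Mle_cong) (auto simp: pT_def pTe_def)
  have anti: "?D pT \<le> ?D q"
  proof (rule D_antitone[OF fin subm eN])
    fix c assume c: "c \<in> N - {e}"
    show "0 \<le> q c \<and> q c \<le> pT c \<and> pT c \<le> 1"
      using insert.prems(2,3,4)[of c] c by (auto simp: pT_def)
  qed
  have nn: "0 \<le> ?D pT"
    by (rule D_nonneg[OF fin mono eN]) (use insert.prems(2) in \<open>auto simp: pT_def\<close>)
  have "\<epsilon> * (1 - p e) * ?D pT \<le> (q e - p e) * ?D q"
  proof (rule mult_mono)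
    show "\<epsilon> * (1 - p e) \<le> q e - p e" using qe by simp
    show "0 \<le> q e - p e" using qe eps pe by (smt (verit) mult_nonneg_nonneg)
  qed (use anti nn in auto)
  note m = this
  have "\<epsilon> * (MLE N f pTe - MLE N f p) = \<epsilon> * (MLE N f pTe - MLE N f pT) + \<epsilon> * (MLE N f pT - MLE N f p)"
    by (simp add: algebra_simps)
  also have "\<dots> = \<epsilon> * (1 - p e) * ?D pT + \<epsilon> * (MLE N f pT - MLE N f p)"
    using d2 c2 by simp
  also have "\<dots> \<le> (q e - p e) * ?D q + (MLE N f q' - MLE N f p)"
    using m IH by (rule add_mono)
  also have "\<dots> = MLE N f q - MLE N f p" using d1 by simp
  finally show ?case unfolding pTe_def .
qed

definition clip :: "('a \<Rightarrow> real) \<Rightarrow> 'a \<Rightarrow> real" where "clip x = (\<lambda>e. min (x e) 1)"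

lemma mle_eq: "multilinear_ext N f x = MLE N f (clip x)"
  unfolding multilinear_ext_def MLE_def clip_def by simp

lemma clip_aux:
  fixes y \<epsilon> :: real
  assumes "0 \<le> y" "0 \<le> \<epsilon>" "\<epsilon> \<le> 1"
  shows "min y 1 + \<epsilon> * (1 - min y 1) \<le> min (y + \<epsilon>) 1"
proof (cases "y \<le> 1")
  case True
  have a: "\<epsilon> * (1 - y) \<le> \<epsilon>" using assms True by (simp add: mult_left_le)
  have b: "\<epsilon> * (1 - y) \<le> 1 - y" using assms True by (simp add: mult_left_le_one_le)
  show ?thesis using True a b by (simp add: min_def)
next
  case False
  then show ?thesis using assms by (simp add: min_def)
qed

lemma key:
  assumes fin: "finite N" and mono: "monotone_set_fun N f" and subm: "submodular_set_fun N f"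
    and T: "T \<subseteq> N" and y: "\<And>e. 0 \<le> y e" and eps: "0 \<le> \<epsilon>" "\<epsilon> \<le> 1"
  shows "\<epsilon> * (f T - multilinear_ext N f y) \<le> multilinear_ext N f (\<lambda>e. y e + \<epsilon> * ind_vec T e) - multilinear_ext N f y"
proof -
  let ?p = "clip y" and ?q = "clip (\<lambda>e. y e + \<epsilon> * ind_vec T e)"
  have s: "\<epsilon> * (MLE N f (\<lambda>e. if e \<in> T then 1 else ?p e) - MLE N f ?p) \<le> MLE N f ?q - MLE N f ?p"
  proof (rule step_ineq[OF fin mono subm eps(1) T])
    show "\<And>e. e \<in> N \<Longrightarrow> 0 \<le> ?p e \<and> ?p e \<le> 1" using y by (auto simp: clip_def)
    show "\<And>e. e \<in> N \<Longrightarrow> 0 \<le> ?q e \<and> ?q e \<le> 1" using y eps by (auto simp: clip_def ind_vec_def)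
    show "\<And>e. e \<in> N - T \<Longrightarrow> ?q e = ?p e" by (auto simp: clip_def ind_vec_def)
    fix e assume "e \<in> T"
    then show "?p e + \<epsilon> * (1 - ?p e) \<le> ?q e" using clip_aux[OF y[of e] eps]
      by (simp add: clip_def ind_vec_def)
  qed
  have "f T = MLE N f (\<lambda>e. if e \<in> T then 1 else 0)"
    by (rule Mle_indicator[OF fin T, symmetric]) simp
  also have "\<dots> \<le> MLE N f (\<lambda>e. if e \<in> T then 1 else ?p e)"
  proof (rule Mle_mono[OF fin])
    fix d R assume "d \<in> N" "R \<subseteq> N - {d}"
    then show "f R \<le> f (insert d R)" by (intro monoD[OF mono]) auto
  qed (use y in \<open>auto simp: clip_def\<close>)
  finally have "\<epsilon> * (f T - MLE N f ?p) \<le> \<epsilon> * (MLE N f (\<lambda>e. if e \<in> T then 1 else ?p e) - MLE N f ?p)"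
    using eps by (intro mult_left_mono) auto
  with s show ?thesis by (simp add: mle_eq)
qed



lemma exp_ineq:
  fixes a :: real and l :: nat
  assumes a: "0 < a" "a \<le> 1" and l: "0 < l"
  shows "(1 - 2 / real l) * (1 - exp (- a)) \<le> 1 - inverse ((1 + a / real l) ^ l)"
proof (cases "l = 1")
  case True
  have "0 \<le> 1 - exp (-a)" "exp (-a) \<le> 1" using a by simp_all
  moreover have "inverse (1 + a) \<le> 1" using a by (simp add: inverse_eq_divide)
  moreover have e1: "(1 - 2 / real l) * (1 - exp (-a)) = - (1 - exp (-a))" and e2: "(1 + a / real l) ^ l = 1 + a"
    using True by simp_all
  ultimately show ?thesis unfolding e1 e2 by linarith
next
  case False
  then have l2: "2 \<le> real l" using l by linarith
  define t where "t = a / real l"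
  define E where "E = exp (- a)"
  have t0: "0 \<le> t" and t1: "t \<le> 1" using a l2 by (auto simp: t_def field_simps)
  have "t - t\<^sup>2 \<le> ln (1 + t)" by (rule ln_one_plus_pos_lower_bound[OF t0 t1])
  then have "real l * (t - t\<^sup>2) \<le> real l * ln (1 + t)" using l by (intro mult_left_mono) auto
  moreover have "real l * (t - t\<^sup>2) = a - a\<^sup>2 / real l" using l by (simp add: t_def field_simps power2_eq_square)
  ultimately have h1: "a - a\<^sup>2 / real l \<le> real l * ln (1 + t)" by simp
  have pos: "0 < 1 + t" using t0 by simp
  have "(1 + t) ^ l = exp (real l * ln (1 + t))" using pos by (simp add: exp_of_nat_mult)
  then have h2: "exp (a - a\<^sup>2 / real l) \<le> (1 + t) ^ l" using h1 by simp
  have h3: "inverse ((1 + t) ^ l) \<le> exp (- a + a\<^sup>2 / real l)"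
  proof -
    have "inverse ((1 + t) ^ l) \<le> inverse (exp (a - a\<^sup>2 / real l))"
      using h2 by (intro le_imp_inverse_le) auto
    then show ?thesis by (simp add: exp_minus[symmetric])
  qed
  define z where "z = a\<^sup>2 / real l"
  have z0: "0 \<le> z" unfolding z_def by simp
  have z1: "z \<le> 1/2"
  proof -
    have "a\<^sup>2 \<le> 1" using a by (simp add: power_le_one)
    then show ?thesis unfolding z_def using l2 by (simp add: field_simps)
  qed
  have ez: "exp z \<le> 1 + 2 * z" using exp_bound_lemma[of z] z0 z1 by simp
  have "exp (- a + z) = E * exp z" unfolding E_def by (rule exp_add)
  also have "\<dots> \<le> E * (1 + 2 * z)" using ez by (intro mult_left_mono) (auto simp: E_def)
  finally have h3b: "exp (- a + z) \<le> E * (1 + 2 * z)" .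
  have h4: "inverse ((1 + t) ^ l) \<le> E * (1 + 2 * z)" using h3 h3b unfolding z_def by linarith
  have E0: "0 < E" unfolding E_def by simp
  have key: "a\<^sup>2 * E \<le> 1 - E"
  proof -
    have "1 + a \<le> exp a" by (rule exp_ge_add_one_self)
    then have "E * (1 + a) \<le> E * exp a" using E0 by (intro mult_left_mono) auto
    moreover have "E * exp a = 1" unfolding E_def by (simp add: exp_minus field_simps)
    moreover have "a\<^sup>2 \<le> a" using a by (simp add: power2_eq_square mult_left_le)
    ultimately have i1: "E + a * E \<le> 1" and i2: "a\<^sup>2 \<le> a" by (simp_all add: algebra_simps)
    have "a\<^sup>2 * E \<le> a * E" using i2 E0 by (intro mult_right_mono) auto
    then show ?thesis using i1 by linarith
  qed
  have "(1 - 2 / real l) * (1 - E) = 1 - E - 2 / real l * (1 - E)" by (simp add: algebra_simps)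
  also have "\<dots> \<le> 1 - E - 2 / real l * (a\<^sup>2 * E)"
    using key l2 by (intro diff_left_mono mult_left_mono) auto
  also have "\<dots> = 1 - E * (1 + 2 * z)" unfolding z_def by (simp add: algebra_simps)
  also have "\<dots> \<le> 1 - inverse ((1 + t) ^ l)" using h4 by simp
  finally show ?thesis unfolding t_def E_def .
qed



lemma E_bind_pmf:
  fixes G :: "'b \<Rightarrow> real"
  assumes bnd: "\<And>x. \<bar>G x\<bar> \<le> B"
  shows "measure_pmf.expectation (bind_pmf M K) G = measure_pmf.expectation M (\<lambda>x. measure_pmf.expectation (K x) G)"
  unfolding measure_pmf_bind
proof (rule integral_bind[where K="count_space UNIV" and B=B and B'=1])
  show "G \<in> borel_measurable (count_space UNIV)" by simp
  show "\<And>x. x \<in> space (count_space UNIV) \<Longrightarrow> \<bar>G x\<bar> \<le> B" using bnd by simp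
  show "(\<lambda>x. measure_pmf (K x)) \<in> measurable (measure_pmf M) (subprob_algebra (count_space UNIV))"
    using measurable_measure_pmf[of K] by simp
  show "finite_measure (measure_pmf M)" by (rule measure_pmf.finite_measure_axioms)
  show "AE x in measure_pmf M. emeasure (measure_pmf (K x)) (space (measure_pmf (K x))) \<le> ennreal 1"
    by (simp add: measure_pmf.emeasure_space_1)
qed

lemma E_bound:
  fixes G :: "'b \<Rightarrow> real"
  assumes bnd: "\<And>x. \<bar>G x\<bar> \<le> B"
  shows "\<bar>measure_pmf.expectation M G\<bar> \<le> B"
proof -
  have int: "integrable M G"
    by (rule measure_pmf.integrable_const_bound[where B=B]) (use bnd in auto)
  have "\<bar>measure_pmf.expectation M G\<bar> \<le> measure_pmf.expectation M (\<lambda>x. \<bar>G x\<bar>)"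
    using integral_norm_bound[of M G] by simp
  also have "\<dots> \<le> B"
    by (rule measure_pmf.integral_le_const) (use int bnd in auto)
  finally show ?thesis .
qed



theorem mainTheorem12:
  fixes N :: "'a set" and \<I> :: "'a set set" and f :: "'a set \<Rightarrow> real"
    and \<alpha> :: real and l :: nat and T :: "'a set"
    and step :: "'a set list \<Rightarrow> 'a set pmf"
  defines "F \<equiv> multilinear_ext N f"
  assumes finN: "finite N"
    and sys: "\<I> \<subseteq> Pow N"
    and fnn: "\<forall>A\<subseteq>N. f A \<ge> 0"
    and norm: "normalized_set_fun f"
    and mono: "monotone_set_fun N f"
    and subm: "submodular_set_fun N f"
    and alpha: "0 < \<alpha>" "\<alpha> \<le> 1"
    and lpos: "l > 0"
    and T: "T \<in> \<I>"
    and inI: "\<forall>i<l. \<forall>h\<in>set_pmf (hist step i). set_pmf (step h) \<subseteq> \<I>"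
    and cond: "\<forall>i<l. \<forall>h\<in>set_pmf (hist step i).
        measure_pmf.expectation (step h)
          (\<lambda>S. F (\<lambda>e. xvec l h e + (1 / real l) * ind_vec S e) - F (xvec l h))
        \<ge> \<alpha> * measure_pmf.expectation (step h)
          (\<lambda>S. (F (\<lambda>e. xvec l h e + (1 / real l) * (ind_vec S e + ind_vec T e)) - F (xvec l h))
              - (F (\<lambda>e. xvec l h e + (1 / real l) * ind_vec S e) - F (xvec l h)))"
  shows "(\<forall>h\<in>set_pmf (hist step l). length h = l \<and> set h \<subseteq> \<I> \<and>
            xvec l h = (\<lambda>e. \<Sum>S\<leftarrow>h. (1 / real l) * ind_vec S e))
     \<and> measure_pmf.expectation (hist step l) (\<lambda>h. F (xvec l h))
         \<ge> (1 - inverse ((1 + \<alpha> / real l) ^ l)) * f T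
     \<and> (1 - inverse ((1 + \<alpha> / real l) ^ l)) * f T
         \<ge> (1 - 2 / real l) * (1 - exp (- \<alpha>)) * f T
     \<and> (\<forall>\<epsilon>>0. real l \<ge> 2 / \<epsilon> \<longrightarrow>
         measure_pmf.expectation (hist step l) (\<lambda>h. F (xvec l h))
           \<ge> (1 - \<epsilon>) * (1 - exp (- \<alpha>)) * f T)"
proof -
  let ?c = "1 / real l"
  have lp: "0 < real l" using lpos by simp
  have TN: "T \<subseteq> N" using T sys by auto
  have fin_I: "finite \<I>" using sys finN by (meson finite_Pow_iff finite_subset)
  define B where "B = (\<Sum>R\<in>Pow N. \<bar>f R\<bar>)"
  have Fb: "\<bar>F x\<bar> \<le> B" if x: "\<And>e. 0 \<le> x e" for x
    unfolding F_def B_def mle_eq by (rule Mle_bound) (use x in \<open>auto simp: clip_def\<close>)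
  have xnn: "0 \<le> xvec l h e" for h e
    unfolding xvec_def using lp by (intro sum_list_nonneg) (auto simp: ind_vec_def)
  have indnn: "0 \<le> ind_vec S e" for S e by (simp add: ind_vec_def)
  have ynn: "0 \<le> xvec l h e + ?c * ind_vec S e" for h S e
    using xnn[of h e] indnn[of S e] lp by (intro add_nonneg_nonneg mult_nonneg_nonneg) auto
  have xapp: "xvec l (h @ [S]) = (\<lambda>e. xvec l h e + ?c * ind_vec S e)" for h S
    unfolding xvec_def by simp
  have hist_prop: "length h = i \<and> set h \<subseteq> \<I>" if "i \<le> l" "h \<in> set_pmf (hist step i)" for i h
    using that
  proof (induction i arbitrary: h)
    case 0
    then show ?case by simp
  next
    case (Suc i)
    then obtain h0 S where h0: "h0 \<in> set_pmf (hist step i)" and S: "S \<in> set_pmf (step h0)" and h: "h = h0 @ [S]"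
      by auto
    have "length h0 = i \<and> set h0 \<subseteq> \<I>" using Suc.IH[OF _ h0] Suc.prems by simp
    moreover have "S \<in> \<I>"
    proof -
      have "i < l" using Suc.prems(1) by simp
      then have "set_pmf (step h0) \<subseteq> \<I>" using inI h0 by simp
      then show ?thesis using S by (rule subsetD)
    qed
    ultimately show ?case using h by simp
  qed
  define E where "E i = measure_pmf.expectation (hist step i) (\<lambda>h. F (xvec l h))" for i
  have Eb: "\<bar>F (xvec l h)\<bar> \<le> B" for h by (rule Fb) (rule xnn)
  have rec: "E i + \<alpha> / real l * f T \<le> (1 + \<alpha> / real l) * E (Suc i)" if i: "i < l" for i
  proof -
    define Y where "Y h = measure_pmf.expectation (step h) (\<lambda>S. F (\<lambda>e. xvec l h e + ?c * ind_vec S e))" for h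
    have Yb: "\<bar>Y h\<bar> \<le> B" for h
      unfolding Y_def by (rule E_bound) (rule Fb, rule ynn)
    have ES: "E (Suc i) = measure_pmf.expectation (hist step i) Y"
      unfolding E_def Y_def hist.simps
      by (subst E_bind_pmf[where B=B]) (auto simp: xapp intro: Eb)
    have Yh: "F (xvec l h) + \<alpha> / real l * f T \<le> (1 + \<alpha> / real l) * Y h"
      if h: "h \<in> set_pmf (hist step i)" for h
    proof -
      have fs: "finite (set_pmf (step h))" using inI i h fin_I by (meson finite_subset)
      have int: "integrable (measure_pmf (step h)) g" for g :: "'a set \<Rightarrow> real"
        by (rule integrable_measure_pmf_finite[OF fs])
      define x where "x = xvec l h"
      define y where "y S = (\<lambda>e. x e + ?c * ind_vec S e)" for S
      define z where "z S = (\<lambda>e. x e + ?c * (ind_vec S e + ind_vec T e))" for S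
      have kz: "?c * (f T - F (y S)) \<le> F (z S) - F (y S)" for S
      proof -
        have "?c * (f T - F (y S)) \<le> F (\<lambda>e. y S e + ?c * ind_vec T e) - F (y S)"
          unfolding F_def
          by (rule key[OF finN mono subm TN]) (use lp ynn in \<open>auto simp: y_def x_def\<close>)
        moreover have "(\<lambda>e. y S e + ?c * ind_vec T e) = z S"
          by (simp add: y_def z_def fun_eq_iff algebra_simps)
        ultimately show ?thesis by simp
      qed
      have c1: "measure_pmf.expectation (step h) (\<lambda>S. F (y S) - F x) = Y h - F x"
        unfolding Y_def y_def x_def by (simp add: int)
      have c2: "measure_pmf.expectation (step h) (\<lambda>S. (F (z S) - F x) - (F (y S) - F x))
          \<ge> ?c * (f T - Y h)"
      proof -
        have "measure_pmf.expectation (step h) (\<lambda>S. ?c * (f T - F (y S)))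
            \<le> measure_pmf.expectation (step h) (\<lambda>S. (F (z S) - F x) - (F (y S) - F x))"
          by (rule integral_mono[OF int int]) (use kz in simp)
        moreover have "measure_pmf.expectation (step h) (\<lambda>S. ?c * (f T - F (y S))) = ?c * (f T - Y h)"
          unfolding Y_def y_def x_def by (simp add: int)
        ultimately show ?thesis by linarith
      qed
      have cnd: "measure_pmf.expectation (step h) (\<lambda>S. F (y S) - F x)
          \<ge> \<alpha> * measure_pmf.expectation (step h) (\<lambda>S. (F (z S) - F x) - (F (y S) - F x))"
        unfolding y_def z_def x_def using cond i h by simp
      have "\<alpha> * (?c * (f T - Y h)) \<le> Y h - F x"
        using cnd c1 c2 alpha mult_left_mono[OF c2, of \<alpha>] by simp
      then show ?thesis unfolding x_def by (simp add: algebra_simps)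
    qed
    have intE: "integrable (measure_pmf (hist step i)) (\<lambda>h. F (xvec l h))"
      by (rule measure_pmf.integrable_const_bound[where B=B]) (use Eb in auto)
    have intY: "integrable (measure_pmf (hist step i)) Y"
      by (rule measure_pmf.integrable_const_bound[where B=B]) (use Yb in auto)
    have int1: "integrable (measure_pmf (hist step i)) (\<lambda>h. F (xvec l h) + \<alpha> / real l * f T)"
      by (rule Bochner_Integration.integrable_add[OF intE]) simp
    have int2: "integrable (measure_pmf (hist step i)) (\<lambda>h. (1 + \<alpha> / real l) * Y h)"
      by (rule integrable_mult_right[OF intY])
    have "measure_pmf.expectation (hist step i) (\<lambda>h. F (xvec l h) + \<alpha> / real l * f T)
        \<le> measure_pmf.expectation (hist step i) (\<lambda>h. (1 + \<alpha> / real l) * Y h)"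
      by (rule integral_mono_AE[OF int1 int2]) (use Yh in \<open>auto intro!: AE_pmfI\<close>)
    then have "E i + \<alpha> / real l * f T \<le> (1 + \<alpha> / real l) * measure_pmf.expectation (hist step i) Y"
      by (simp add: intE E_def)
    then show ?thesis by (simp only: ES)
  qed
  have E0: "E 0 = 0"
  proof -
    have "F (xvec l []) = MLE N f (clip (xvec l []))" unfolding F_def mle_eq ..
    also have "\<dots> = f {}" by (rule Mle_indicator[OF finN]) (auto simp: xvec_def clip_def)
    finally show ?thesis using norm unfolding E_def normalized_set_fun_def by simp
  qed
  have fTnn: "0 \<le> f T" using fnn TN by simp
  define u where "u = 1 + \<alpha> / real l"
  have u1: "1 \<le> u" unfolding u_def using alpha lp by simp
  have bnd: "f T - E i \<le> f T / u ^ i" if "i \<le> l" for i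
    using that
  proof (induction i)
    case 0
    then show ?case using E0 by simp
  next
    case (Suc i)
    have r: "E i + \<alpha> / real l * f T \<le> u * E (Suc i)" using rec[of i] Suc.prems unfolding u_def by simp
    have ih: "f T - E i \<le> f T / u ^ i" using Suc by simp
    have up: "0 < u ^ i" using u1 by simp
    have "u * (f T - E (Suc i)) \<le> f T - E i" using r unfolding u_def by (simp add: algebra_simps)
    also have "\<dots> \<le> f T / u ^ i" by (rule ih)
    finally have "u * (f T - E (Suc i)) \<le> f T / u ^ i" .
    then show ?case using u1 up by (simp add: field_simps)
  qed
  have main: "(1 - inverse ((1 + \<alpha> / real l) ^ l)) * f T \<le> E l"
    using bnd[of l] unfolding u_def by (simp add: algebra_simps divide_inverse)
  have ex: "(1 - 2 / real l) * (1 - exp (- \<alpha>)) * f T \<le> (1 - inverse ((1 + \<alpha> / real l) ^ l)) * f T"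
    by (rule mult_right_mono[OF exp_ineq[OF alpha lpos] fTnn])
  have part1: "\<forall>h\<in>set_pmf (hist step l). length h = l \<and> set h \<subseteq> \<I> \<and>
            xvec l h = (\<lambda>e. \<Sum>S\<leftarrow>h. (1 / real l) * ind_vec S e)"
    using hist_prop[of l] by (simp add: xvec_def)
  have part4: "\<forall>\<epsilon>>0. real l \<ge> 2 / \<epsilon> \<longrightarrow> E l \<ge> (1 - \<epsilon>) * (1 - exp (- \<alpha>)) * f T"
  proof (intro allI impI)
    fix \<epsilon> :: real assume e: "0 < \<epsilon>" and le: "2 / \<epsilon> \<le> real l"
    have "2 / real l \<le> \<epsilon>" using e le lp by (simp add: field_simps)
    moreover have "0 \<le> (1 - exp (- \<alpha>)) * f T" using alpha fTnn by simp
    ultimately have "(1 - \<epsilon>) * ((1 - exp (- \<alpha>)) * f T) \<le> (1 - 2 / real l) * ((1 - exp (- \<alpha>)) * f T)"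
      by (intro mult_right_mono) auto
    then show "(1 - \<epsilon>) * (1 - exp (- \<alpha>)) * f T \<le> E l" using main ex by (simp add: mult.assoc)
  qed
  have m2: "(1 - inverse ((1 + \<alpha> / real l) ^ l)) * f T \<le> measure_pmf.expectation (hist step l) (\<lambda>h. F (xvec l h))"
    using main unfolding E_def .
  have p4: "\<forall>\<epsilon>>0. real l \<ge> 2 / \<epsilon> \<longrightarrow> measure_pmf.expectation (hist step l) (\<lambda>h. F (xvec l h)) \<ge> (1 - \<epsilon>) * (1 - exp (- \<alpha>)) * f T"
    using part4 unfolding E_def .
  show ?thesis by (intro conjI part1 m2 ex p4)
qed


end
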